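(* For every $d\ge1$ and all nonnegative integers $k_1,\dots,k_d$, \[ \lim_{n\to\infty}\mathbb E\Bigl(\prod_{i=1}^d \bigl(X[n,i]\bigr)_{k_i}\Bigr)=1 . \]
   Context: Uniform random recursive tree: start at step $0$ with the tree $T_0$ consisting of the single vertex $0$ (the root). At step $n\ge1$, a vertex is chosen uniformly at random among the existing vertices $0,1,\dots,n-1$, independently of the past, and a new vertex $n$ is added and joined by an edge to the chosen vertex; $T_n$ is the resulting tree on vertices $0,\dots,n$. $\deg_n(i)$ is the degree of vertex $i$ in $T_n$, $L_n(1)$ is the set of neighbours of the root $0$ in $T_n$, and $X[n,d]=|\{i\in L_n(1):\deg_n(i)=d\}|$. For real $a$ and integer $k\ge0$, the falling factorial is $(a)_0=1$ and $(a)_k=a(a-1)\cdots(a-k+1)$ for $k\ge1$. *)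

theory Defs
  imports "HOL-Probability.Probability"
begin

text \<open>A tree T_n on vertices 0..n is encoded by its
parent function par: for 1 <= j <= n, par j is the vertex to which j was attached
(par j < j). Values outside 1..n are irrelevant (set to 0).\<close>

fun rrt :: "nat \<Rightarrow> (nat \<Rightarrow> nat) pmf" where
  "rrt 0 = return_pmf (\<lambda>_. 0)"
| "rrt (Suc n) = do { p \<leftarrow> rrt n; c \<leftarrow> pmf_of_set {..n}; return_pmf (p(Suc n := c)) }"

definition deg :: "(nat \<Rightarrow> nat) \<Rightarrow> nat \<Rightarrow> nat \<Rightarrow> nat" where
  "deg par n i = card {j \<in> {1..n}. par j = i} + (if 1 \<le> i \<and> i \<le> n then 1 else 0)"

definition rootnbrs :: "(nat \<Rightarrow> nat) \<Rightarrow> nat \<Rightarrow> nat set" where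
  "rootnbrs par n = {j \<in> {1..n}. par j = 0}"

definition Xcnt :: "(nat \<Rightarrow> nat) \<Rightarrow> nat \<Rightarrow> nat \<Rightarrow> nat" where
  "Xcnt par n d = card {i \<in> rootnbrs par n. deg par n i = d}"

definition ffall :: "real \<Rightarrow> nat \<Rightarrow> real" where
  "ffall a k = (\<Prod>j<k. (a - real j))"

end

theory Submission
  imports Defs
begin


lemma rrt_fin: "finite (set_pmf (rrt n))"
  by (induction n) auto

lemma rrt_supp: "p \<in> set_pmf (rrt n) \<Longrightarrow> \<forall>j\<in>{1..n}. p j < j"
proof (induction n arbitrary: p)
  case 0 then show ?case by auto
next
  case (Suc n)
  then obtain q c where q: "q \<in> set_pmf (rrt n)" "c \<le> n" "p = q(Suc n := c)" by auto
  show ?case using Suc.IH[OF q(1)] q(2,3) by (auto simp: le_Suc_eq)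
qed

lemma exp_rrt: "measure_pmf.expectation (rrt n) (g::_ \<Rightarrow> real) = (\<Sum>p\<in>set_pmf (rrt n). pmf (rrt n) p * g p)"
  by (subst integral_measure_pmf[of "set_pmf (rrt n)"]) (auto simp: rrt_fin)

lemma exp_rrt_Suc: "measure_pmf.expectation (rrt (Suc n)) (g::_ \<Rightarrow> real) =
   (\<Sum>p\<in>set_pmf (rrt n). pmf (rrt n) p * ((\<Sum>c\<le>n. g (p(Suc n := c))) / real (Suc n)))"
proof -
  have "measure_pmf.expectation (rrt (Suc n)) g = (\<Sum>p\<in>set_pmf (rrt n). pmf (rrt n) p *\<^sub>R
     measure_pmf.expectation (pmf_of_set {..n} \<bind> (\<lambda>c. return_pmf (p(Suc n := c)))) g)"
    by (simp only: rrt.simps, rule pmf_expectation_bind) (auto simp: rrt_fin)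
  also have "\<dots> = (\<Sum>p\<in>set_pmf (rrt n). pmf (rrt n) p * ((\<Sum>c\<le>n. g (p(Suc n := c))) / real (Suc n)))"
    by (intro sum.cong refl, subst pmf_expectation_bind_pmf_of_set) (auto simp: sum_divide_distrib field_simps)
  finally show ?thesis .
qed



context
  fixes p :: "nat \<Rightarrow> nat" and n c :: nat
  assumes sp: "\<forall>j\<in>{1..n}. p j < j" and cn: "c \<le> n"
begin

lemma deg_new_old: "i \<le> n \<Longrightarrow> deg (p(Suc n := c)) (Suc n) i = deg p n i + (if c = i then 1 else 0)"
proof -
  assume i: "i \<le> n"
  have "{j \<in> {1..Suc n}. (p(Suc n := c)) j = i} = {j \<in> {1..n}. p j = i} \<union> (if c = i then {Suc n} else {})"
    by (auto simp: le_Suc_eq)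
  then show ?thesis using i by (auto simp: deg_def)
qed

lemma deg_new_new: "deg (p(Suc n := c)) (Suc n) (Suc n) = 1"
proof -
  have "{j \<in> {1..Suc n}. (p(Suc n := c)) j = Suc n} = {}"
    using sp cn by (auto simp: le_Suc_eq) (metis atLeastAtMost_iff le_refl less_Suc_eq not_less order_less_trans)
  then show ?thesis by (auto simp: deg_def)
qed

lemma rn_new: "rootnbrs (p(Suc n := c)) (Suc n) = rootnbrs p n \<union> (if c = 0 then {Suc n} else {})"
  by (auto simp: rootnbrs_def le_Suc_eq)

lemma rn_sub: "rootnbrs p n \<subseteq> {1..n}" by (auto simp: rootnbrs_def)

lemma rn_le: "j \<in> rootnbrs p n \<Longrightarrow> j \<le> n \<and> 1 \<le> j" using rn_sub by auto

lemma X_c0: "c = 0 \<Longrightarrow> Xcnt (p(Suc n := c)) (Suc n) i = Xcnt p n i + (if i = 1 then 1 else 0)"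
proof -
  assume c: "c = 0"
  have r1: "rootnbrs (p(Suc n := c)) (Suc n) = rootnbrs p n \<union> {Suc n}"
    by (subst rn_new) (simp add: c)
  have d2: "deg (p(Suc n := c)) (Suc n) j = deg p n j" if "j \<in> rootnbrs p n" for j
    by (subst deg_new_old) (use that rn_le[of j] c in auto)
  have nS: "Suc n \<notin> rootnbrs p n" using rn_le[of "Suc n"] by auto
  have "{j \<in> rootnbrs (p(Suc n := c)) (Suc n). deg (p(Suc n := c)) (Suc n) j = i}
     = {j \<in> rootnbrs p n. deg p n j = i} \<union> (if i = 1 then {Suc n} else {})" (is "?L = ?R")
  proof (rule set_eqI)
    fix j
    show "j \<in> ?L \<longleftrightarrow> j \<in> ?R"
    proof (cases "j = Suc n")
      case True
      then show ?thesis using nS by (simp add: r1 deg_new_new)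
    next
      case False
      then show ?thesis using d2[of j] by (auto simp add: r1)
    qed
  qed
  moreover note nS
  moreover have "finite {j \<in> rootnbrs p n. deg p n j = i}" by (rule finite_subset[OF _ finite_atLeastAtMost[of 1 n]]) (use rn_sub in auto)
  ultimately show ?thesis by (cases "i = 1") (auto simp: Xcnt_def)
qed

lemma X_cout: "c \<noteq> 0 \<Longrightarrow> c \<notin> rootnbrs p n \<Longrightarrow> Xcnt (p(Suc n := c)) (Suc n) i = Xcnt p n i"
proof -
  assume c: "c \<noteq> 0" "c \<notin> rootnbrs p n"
  have r1: "rootnbrs (p(Suc n := c)) (Suc n) = rootnbrs p n"
    by (subst rn_new) (simp add: c)
  have d2: "deg (p(Suc n := c)) (Suc n) j = deg p n j" if "j \<in> rootnbrs p n" for j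
    by (subst deg_new_old) (use that rn_le[of j] c in auto)
  have "{j \<in> rootnbrs (p(Suc n := c)) (Suc n). deg (p(Suc n := c)) (Suc n) j = i}
     = {j \<in> rootnbrs p n. deg p n j = i}"
    using d2 by (auto simp: r1)
  then show ?thesis by (simp add: Xcnt_def)
qed

lemma X_cin: "c \<in> rootnbrs p n \<Longrightarrow> real (Xcnt (p(Suc n := c)) (Suc n) i) =
   real (Xcnt p n i) - (if deg p n c = i then 1 else 0) + (if Suc (deg p n c) = i then 1 else 0)"
proof -
  assume c: "c \<in> rootnbrs p n"
  let ?A = "{j \<in> rootnbrs p n. deg p n j = i}"
  have fin: "finite ?A"
    by (rule finite_subset[OF _ finite_atLeastAtMost[of 1 n]]) (use rn_sub in auto)
  have r1: "rootnbrs (p(Suc n := c)) (Suc n) = rootnbrs p n"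
    by (subst rn_new) (use c rn_le[of c] in simp)
  have d2: "deg (p(Suc n := c)) (Suc n) j = deg p n j + (if c = j then 1 else 0)" if "j \<in> rootnbrs p n" for j
    by (subst deg_new_old) (use that rn_le[of j] in auto)
  have "{j \<in> rootnbrs (p(Suc n := c)) (Suc n). deg (p(Suc n := c)) (Suc n) j = i}
     = (?A - {c}) \<union> (if Suc (deg p n c) = i then {c} else {})"
    using d2 c by (auto simp: r1)
  then have eq: "Xcnt (p(Suc n := c)) (Suc n) i = card ((?A - {c}) \<union> (if Suc (deg p n c) = i then {c} else {}))"
    by (simp add: Xcnt_def)
  show ?thesis
  proof (cases "deg p n c = i")
    case True
    then have "c \<in> ?A" using c by simp
    then have "card (?A - {c}) = card ?A - 1" "card ?A \<ge> 1" using fin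
      by (simp add: card_Diff_singleton) (metis One_nat_def Suc_leI \<open>c \<in> ?A\<close> card_gt_0_iff empty_iff fin)
    then show ?thesis using True eq by (simp add: Xcnt_def of_nat_diff)
  next
    case False
    then have "c \<notin> ?A" by simp
    then have "?A - {c} = ?A" by simp
    then show ?thesis using False eq fin \<open>c \<notin> ?A\<close> by (simp add: Xcnt_def)
  qed
qed

end



lemma F1: "ffall a (Suc m) = ffall a m * (a - real m)"
  by (simp add: ffall_def)

lemma F2: "ffall (a+1) (Suc m) = (a+1) * ffall a m"
  unfolding ffall_def by (subst prod.lessThan_Suc_shift) (simp add: algebra_simps)

lemma F3: "ffall (a+1) m = ffall a m + real m * ffall a (m - 1)"
proof (cases m)
  case 0 then show ?thesis by (simp add: ffall_def)
next
  case (Suc m') then show ?thesis unfolding Suc F2 unfolding F1 diff_Suc_1 by (simp add: algebra_simps)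
qed

lemma F4: "a * ffall (a-1) m = ffall a m * (a - real m)"
  using F2[of "a-1" m] F1[of a m] by simp

definition P :: "nat \<Rightarrow> (nat \<Rightarrow> real) \<Rightarrow> (nat \<Rightarrow> nat) \<Rightarrow> real" where
  "P D x k = (\<Prod>i\<in>{1..D}. ffall (x i) (k i))"

definition upd :: "(nat \<Rightarrow> real) \<Rightarrow> nat \<Rightarrow> nat \<Rightarrow> real" where
  "upd x e = (\<lambda>i. x i - (if e = i then 1 else 0) + (if Suc e = i then 1 else 0))"

lemma split1: "finite A \<Longrightarrow> e \<in> A \<Longrightarrow> prod f A = f e * prod f (A - {e})"
  by (simp add: prod.remove)

lemma split2: "finite A \<Longrightarrow> e \<in> A \<Longrightarrow> Suc e \<in> A \<Longrightarrow> prod f A = f e * f (Suc e) * prod f (A - {e, Suc e})"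
proof -
  assume a: "finite A" "e \<in> A" "Suc e \<in> A"
  have "prod f A = f e * prod f (A - {e})" using a by (simp add: prod.remove)
  also have "prod f (A - {e}) = f (Suc e) * prod f (A - {e} - {Suc e})"
    using a by (intro split1) auto
  finally show ?thesis by (simp add: insert_commute set_diff_eq algebra_simps)
qed

lemma I1: "D \<ge> 1 \<Longrightarrow> P D (x(1 := x 1 + 1)) k - P D x k = real (k 1) * P D x (k(1 := k 1 - 1))"
proof -
  assume D: "D \<ge> 1"
  let ?R = "\<lambda>y kk. \<Prod>i\<in>{1..D} - {1}. ffall (y i) (kk i)"
  have s: "P D y kk = ffall (y 1) (kk 1) * ?R y kk" for y kk
    unfolding P_def using D by (intro split1) auto
  have "?R (x(1 := x 1 + 1)) k = ?R x k" "?R x (k(1 := k 1 - 1)) = ?R x k"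
    by (auto intro!: prod.cong)
  moreover have "ffall (x 1 + 1) (k 1) = ffall (x 1) (k 1) + real (k 1) * ffall (x 1) (k 1 - 1)"
    by (rule F3)
  ultimately show ?thesis unfolding s by (simp add: algebra_simps)
qed

lemma I2: "e \<in> {1..D} \<Longrightarrow> x e * (P D (upd x e) k - P D x k) =
   - real (k e) * P D x k + (if Suc e \<le> D then real (k (Suc e)) * P D x (k(e := Suc (k e), Suc e := k (Suc e) - 1)) else 0)"
proof (cases "Suc e \<le> D")
  case True
  assume e: "e \<in> {1..D}"
  let ?R = "\<lambda>y kk. \<Prod>i\<in>{1..D} - {e, Suc e}. ffall (y i) (kk i)"
  have s: "P D y kk = ffall (y e) (kk e) * ffall (y (Suc e)) (kk (Suc e)) * ?R y kk" for y kk
    unfolding P_def using e True by (intro split2) auto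
  have r: "?R (upd x e) k = ?R x k" "?R x (k(e := Suc (k e), Suc e := k (Suc e) - 1)) = ?R x k"
    by (auto intro!: prod.cong simp: upd_def)
  have u: "upd x e e = x e - 1" "upd x e (Suc e) = x (Suc e) + 1" by (auto simp: upd_def)
  define a where "a = x e"
  define b where "b = x (Suc e)"
  have key: "a * (ffall (a-1) ka * ffall (b+1) kb - ffall a ka * ffall b kb) =
     - real ka * (ffall a ka * ffall b kb) + real kb * (ffall a (Suc ka) * ffall b (kb - 1))" for ka kb
  proof -
    have "a * (ffall (a-1) ka * ffall (b+1) kb - ffall a ka * ffall b kb) = (a * ffall (a-1) ka) * ffall (b+1) kb - a * (ffall a ka * ffall b kb)" by (simp add: algebra_simps)
    also have "\<dots> = (ffall a ka * (a - ka)) * (ffall b kb + kb * ffall b (kb-1)) - a*(ffall a ka * ffall b kb)" by (simp only: F4 F3)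
    also have "\<dots> = - real ka * (ffall a ka * ffall b kb) + real kb * (ffall a (Suc ka) * ffall b (kb - 1))" by (simp add: F1 algebra_simps)
    finally show ?thesis .
  qed
  show ?thesis unfolding s r u using True key[of "k e" "k (Suc e)", THEN arg_cong[where f="\<lambda>t. t * ?R x k"]]
    by (simp add: a_def[symmetric] b_def[symmetric] algebra_simps)
next
  case False
  assume e: "e \<in> {1..D}"
  let ?R = "\<lambda>y kk. \<Prod>i\<in>{1..D} - {e}. ffall (y i) (kk i)"
  have s: "P D y kk = ffall (y e) (kk e) * ?R y kk" for y kk
    unfolding P_def using e by (intro split1) auto
  have r: "?R (upd x e) k = ?R x k"
    using False by (auto intro!: prod.cong simp: upd_def)
  have u: "upd x e e = x e - 1" by (auto simp: upd_def)
  have key: "a * (ffall (a-1) ka - ffall a ka) = - real ka * ffall a ka" for a ka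
  proof -
    have "a * (ffall (a-1) ka - ffall a ka) = (a * ffall (a-1) ka) - a * ffall a ka" by (simp add: algebra_simps)
    also have "\<dots> = - real ka * ffall a ka" by (simp only: F4) (simp add: algebra_simps)
    finally show ?thesis .
  qed
  show ?thesis unfolding s r u using False key[of "x e" "k e", THEN arg_cong[where f="\<lambda>t. t * ?R x k"]]
    by (simp add: algebra_simps)
qed




definition sh :: "nat \<Rightarrow> (nat \<Rightarrow> nat) \<Rightarrow> nat \<Rightarrow> nat" where
  "sh e k = k(e := Suc (k e), Suc e := k (Suc e) - 1)"

lemma step_sum:
  fixes p :: "nat \<Rightarrow> nat" and n D :: nat and k :: "nat \<Rightarrow> nat"
  assumes sp: "\<forall>j\<in>{1..n}. p j < j" and D: "D \<ge> 1"
  defines "x \<equiv> \<lambda>i. real (Xcnt p n i)"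
  shows "(\<Sum>c\<le>n. P D (\<lambda>i. real (Xcnt (p(Suc n := c)) (Suc n) i)) k)
    = real (Suc n) * P D x k + real (k 1) * P D x (k(1 := k 1 - 1)) - real (\<Sum>e\<in>{1..D}. k e) * P D x k
      + (\<Sum>e\<in>{1..D}. if Suc e \<le> D then real (k (Suc e)) * P D x (sh e k) else 0)"
proof -
  let ?R = "rootnbrs p n"
  let ?y = "\<lambda>c. (\<lambda>i. real (Xcnt (p(Suc n := c)) (Suc n) i))"
  let ?h = "\<lambda>e. P D (upd x e) k - P D x k"
  define g where "g c = P D (?y c) k - P D x k" for c
  have R1: "?R \<subseteq> {1..n}" by (auto simp: rootnbrs_def)
  have y0: "?y 0 = x(1 := x 1 + 1)"
    using X_c0[OF sp, of 0] by (auto simp: x_def)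
  have yR: "?y c = upd x (deg p n c)" if "c \<in> ?R" for c
    using X_cin[OF sp _ that] that R1 by (auto simp: x_def upd_def)
  have yO: "?y c = x" if "c \<notin> ?R" "c \<noteq> 0" "c \<le> n" for c
    using X_cout[OF sp that(3) that(2,1)] by (auto simp: x_def)
  have "(\<Sum>c\<le>n. P D (?y c) k) = (\<Sum>c\<le>n. P D x k + g c)"
    by (simp add: g_def)
  also have "\<dots> = real (Suc n) * P D x k + (\<Sum>c\<le>n. g c)"
    by (simp add: sum.distrib)
  also have "(\<Sum>c\<le>n. g c) = g 0 + (\<Sum>c\<in>{1..n}. g c)"
  proof -
    have "{..n} = insert 0 {1..n}" by auto
    then show ?thesis by simp
  qed
  also have "(\<Sum>c\<in>{1..n}. g c) = (\<Sum>c\<in>?R. g c)"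
    by (rule sum.mono_neutral_right) (use R1 yO in \<open>auto simp: g_def\<close>)
  also have "\<dots> = (\<Sum>c\<in>?R. ?h (deg p n c))"
    by (rule sum.cong) (auto simp: g_def yR)
  also have "\<dots> = (\<Sum>c\<in>?R. \<Sum>e\<in>{1..D}. if deg p n c = e then ?h e else 0)"
  proof (rule sum.cong[OF refl])
    fix c assume c: "c \<in> ?R"
    then have d1: "deg p n c \<ge> 1" using R1 by (auto simp: deg_def)
    show "?h (deg p n c) = (\<Sum>e\<in>{1..D}. if deg p n c = e then ?h e else 0)"
    proof (cases "deg p n c \<le> D")
      case True then show ?thesis using d1 by simp
    next
      case False
      have "P D (upd x (deg p n c)) k = P D x k"
        using False by (auto simp: P_def upd_def intro!: prod.cong)
      then show ?thesis using False by simp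
    qed
  qed
  also have "\<dots> = (\<Sum>e\<in>{1..D}. x e * ?h e)"
  proof -
    have "(\<Sum>c\<in>?R. \<Sum>e\<in>{1..D}. if deg p n c = e then ?h e else 0)
       = (\<Sum>e\<in>{1..D}. \<Sum>c\<in>?R. if deg p n c = e then ?h e else 0)" by (rule sum.swap)
    also have "\<dots> = (\<Sum>e\<in>{1..D}. x e * ?h e)"
    proof (rule sum.cong[OF refl])
      fix e
      have "(\<Sum>c\<in>?R. if deg p n c = e then ?h e else 0) = (\<Sum>c\<in>{c\<in>?R. deg p n c = e}. ?h e)"
        by (rule sum.inter_filter[symmetric]) (use R1 finite_subset in blast)
      then show "(\<Sum>c\<in>?R. if deg p n c = e then ?h e else 0) = x e * ?h e"
        by (simp add: x_def Xcnt_def)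
    qed
    finally show ?thesis .
  qed
  also have "\<dots> = (\<Sum>e\<in>{1..D}. - real (k e) * P D x k + (if Suc e \<le> D then real (k (Suc e)) * P D x (sh e k) else 0))"
    by (rule sum.cong[OF refl]) (simp add: I2 sh_def)
  also have "g 0 = real (k 1) * P D x (k(1 := k 1 - 1))"
    using I1[OF D, of x k] by (simp add: g_def y0)
  finally have eq: "(\<Sum>c\<le>n. P D (?y c) k) = real (Suc n) * P D x k + (real (k 1) * P D x (k(1 := k 1 - 1)) +
     (\<Sum>e\<in>{1..D}. - real (k e) * P D x k + (if Suc e \<le> D then real (k (Suc e)) * P D x (sh e k) else 0)))" .
  have s2: "(\<Sum>e\<in>{1..D}. - real (k e) * P D x k + (if Suc e \<le> D then real (k (Suc e)) * P D x (sh e k) else 0))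
     = - real (\<Sum>e\<in>{1..D}. k e) * P D x k + (\<Sum>e\<in>{1..D}. if Suc e \<le> D then real (k (Suc e)) * P D x (sh e k) else 0)"
    by (simp add: sum.distrib sum_distrib_right sum_negf sum_subtractf)
  show ?thesis unfolding eq s2 by simp
qed




definition Ex :: "nat \<Rightarrow> (nat \<Rightarrow> nat) \<Rightarrow> nat \<Rightarrow> real" where
  "Ex D k n = measure_pmf.expectation (rrt n) (\<lambda>par. P D (\<lambda>i. real (Xcnt par n i)) k)"

definition w :: "nat \<Rightarrow> (nat \<Rightarrow> nat) \<Rightarrow> nat \<Rightarrow> real" where
  "w D k e = (if Suc e \<le> D then real (k (Suc e)) else 0)"

lemma Ex_rec:
  assumes D: "D \<ge> 1"
  shows "Ex D k (Suc n) = Ex D k n + (real (k 1) * Ex D (k(1 := k 1 - 1)) n - real (\<Sum>e\<in>{1..D}. k e) * Ex D k n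
     + (\<Sum>e\<in>{1..D}. w D k e * Ex D (sh e k) n)) / real (Suc n)"
proof -
  let ?S = "set_pmf (rrt n)"
  let ?m = "pmf (rrt n)"
  let ?x = "\<lambda>p. (\<lambda>i. real (Xcnt p n i))"
  let ?K = "real (\<Sum>e\<in>{1..D}. k e)"
  have "Ex D k (Suc n) = (\<Sum>p\<in>?S. ?m p * ((\<Sum>c\<le>n. P D (\<lambda>i. real (Xcnt (p(Suc n := c)) (Suc n) i)) k) / real (Suc n)))"
    unfolding Ex_def by (rule exp_rrt_Suc)
  also have "\<dots> = (\<Sum>p\<in>?S. ?m p * (P D (?x p) k + (real (k 1) * P D (?x p) (k(1 := k 1 - 1)) - ?K * P D (?x p) k
      + (\<Sum>e\<in>{1..D}. w D k e * P D (?x p) (sh e k))) / real (Suc n)))"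
  proof (rule sum.cong[OF refl])
    fix p assume "p \<in> ?S"
    then have sp: "\<forall>j\<in>{1..n}. p j < j" by (rule rrt_supp)
    have ww: "(\<Sum>e\<in>{1..D}. if Suc e \<le> D then real (k (Suc e)) * P D (?x p) (sh e k) else 0)
       = (\<Sum>e\<in>{1..D}. w D k e * P D (?x p) (sh e k))"
      by (rule sum.cong) (auto simp: w_def)
    show "?m p * ((\<Sum>c\<le>n. P D (\<lambda>i. real (Xcnt (p(Suc n := c)) (Suc n) i)) k) / real (Suc n)) =
       ?m p * (P D (?x p) k + (real (k 1) * P D (?x p) (k(1 := k 1 - 1)) - ?K * P D (?x p) k
      + (\<Sum>e\<in>{1..D}. w D k e * P D (?x p) (sh e k))) / real (Suc n))"
      unfolding step_sum[OF sp D] ww by (simp add: field_simps)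
  qed
  also have "\<dots> = (\<Sum>p\<in>?S. ?m p * P D (?x p) k) + (real (k 1) * (\<Sum>p\<in>?S. ?m p * P D (?x p) (k(1 := k 1 - 1)))
      - ?K * (\<Sum>p\<in>?S. ?m p * P D (?x p) k)
      + (\<Sum>e\<in>{1..D}. w D k e * (\<Sum>p\<in>?S. ?m p * P D (?x p) (sh e k)))) / real (Suc n)"
  proof -
    have sw: "(\<Sum>e\<in>{1..D}. w D k e * (\<Sum>p\<in>?S. ?m p * P D (?x p) (sh e k)))
       = (\<Sum>p\<in>?S. ?m p * (\<Sum>e\<in>{1..D}. w D k e * P D (?x p) (sh e k)))"
      by (simp add: sum_distrib_left algebra_simps) (rule sum.swap)
    let ?B = "\<lambda>p. real (k 1) * P D (?x p) (k(1 := k 1 - 1)) - ?K * P D (?x p) k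
      + (\<Sum>e\<in>{1..D}. w D k e * P D (?x p) (sh e k))"
    have "(\<Sum>p\<in>?S. ?m p * (P D (?x p) k + ?B p / real (Suc n))) = (\<Sum>p\<in>?S. ?m p * P D (?x p) k + (?m p * ?B p) / real (Suc n))"
      by (simp add: algebra_simps)
    also have "\<dots> = (\<Sum>p\<in>?S. ?m p * P D (?x p) k) + (\<Sum>p\<in>?S. ?m p * ?B p) / real (Suc n)"
      by (simp add: sum.distrib sum_divide_distrib)
    also have "(\<Sum>p\<in>?S. ?m p * ?B p) = real (k 1) * (\<Sum>p\<in>?S. ?m p * P D (?x p) (k(1 := k 1 - 1)))
      - ?K * (\<Sum>p\<in>?S. ?m p * P D (?x p) k)
      + (\<Sum>p\<in>?S. ?m p * (\<Sum>e\<in>{1..D}. w D k e * P D (?x p) (sh e k)))"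
      by (simp add: sum_distrib_left sum.distrib sum_subtractf algebra_simps)
    finally show ?thesis unfolding sw .
  qed
  finally show ?thesis unfolding Ex_def exp_rrt .
qed




lemma rec_lim:
  fixes a e :: "nat \<Rightarrow> real" and K :: nat
  assumes K: "K \<ge> 1" and e: "e \<longlonglongrightarrow> 0"
    and r: "\<And>n. a (Suc n) = (1 - real K / real (Suc n)) * a n + e n / real (Suc n)"
  shows "a \<longlonglongrightarrow> 0"
proof (rule LIMSEQ_I)
  fix eps :: real assume eps: "eps > 0"
  have b: "real (Suc n) * \<bar>a (Suc n)\<bar> \<le> real n * \<bar>a n\<bar> + \<bar>e n\<bar>" if "n \<ge> K" for n
  proof -
    have "real (Suc n) * a (Suc n) = real (Suc n) * ((1 - real K / real (Suc n)) * a n + e n / real (Suc n))"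
      by (simp only: r)
    also have "\<dots> = (real (Suc n) - real K) * a n + e n"
      by (simp add: distrib_left right_diff_distrib mult.assoc[symmetric])
    finally have "real (Suc n) * a (Suc n) = (real (Suc n) - real K) * a n + e n" .
    then have "real (Suc n) * \<bar>a (Suc n)\<bar> = \<bar>(real (Suc n) - real K) * a n + e n\<bar>"
      by (metis abs_mult abs_of_nat)
    also have "\<dots> \<le> \<bar>(real (Suc n) - real K) * a n\<bar> + \<bar>e n\<bar>" by (rule abs_triangle_ineq)
    also have "\<bar>(real (Suc n) - real K) * a n\<bar> = (real (Suc n) - real K) * \<bar>a n\<bar>"
      using that by (simp add: abs_mult)
    also have "\<dots> \<le> real n * \<bar>a n\<bar>"
      using K by (intro mult_right_mono) auto
    finally show ?thesis by simp
  qed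
  obtain N0 where N0: "\<And>n. n \<ge> N0 \<Longrightarrow> norm (e n - 0) < eps / 2"
    using LIMSEQ_D[OF e, of "eps/2"] eps by auto
  define N where "N = max N0 K"
  define C where "C = real N * \<bar>a N\<bar>"
  have ind: "real m * \<bar>a m\<bar> \<le> C + real (m - N) * (eps / 2)" if "m \<ge> N" for m
    using that
  proof (induction m rule: dec_induct)
    case base then show ?case by (simp add: C_def)
  next
    case (step m)
    have "real (Suc m) * \<bar>a (Suc m)\<bar> \<le> real m * \<bar>a m\<bar> + \<bar>e m\<bar>"
      using step.hyps N_def by (intro b) auto
    moreover have "\<bar>e m\<bar> < eps / 2" using N0[of m] step.hyps N_def by auto
    ultimately have h: "real (Suc m) * \<bar>a (Suc m)\<bar> < real m * \<bar>a m\<bar> + eps / 2" by linarith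
    have "real (Suc m - N) = real (m - N) + 1" using step.hyps by (simp add: Suc_diff_le)
    then have "real (Suc m - N) * (eps / 2) = real (m - N) * (eps / 2) + eps / 2" by (simp only: distrib_right mult_1_left)
    then show ?case using h step.IH by linarith
  qed
  have C0: "C \<ge> 0" by (simp add: C_def)
  define M where "M = max (Suc N) (nat \<lceil>2 * C / eps\<rceil> + 1)"
  show "\<exists>no. \<forall>n\<ge>no. norm (a n - 0) < eps"
  proof (intro exI allI impI)
    fix m assume m: "m \<ge> M"
    then have mN: "m \<ge> N" "m > 0" by (auto simp: M_def)
    have "real m > 2 * C / eps"
    proof -
      have "real m \<ge> real (nat \<lceil>2 * C / eps\<rceil> + 1)" using m by (auto simp: M_def)
      moreover have "real (nat \<lceil>2 * C / eps\<rceil>) \<ge> 2 * C / eps" by linarith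
      ultimately show ?thesis by simp
    qed
    then have Cm: "C < real m * (eps / 2)" using eps by (simp add: field_simps)
    have "real m * \<bar>a m\<bar> \<le> C + real (m - N) * (eps / 2)" by (rule ind[OF mN(1)])
    also have "\<dots> \<le> C + real m * (eps / 2)" using eps by (intro add_left_mono mult_right_mono) auto
    also have "\<dots> < real m * eps" using Cm by simp
    finally have "real m * \<bar>a m\<bar> < real m * eps" .
    then show "norm (a m - 0) < eps" using mN(2) by simp
  qed
qed




lemma sum_split2: "finite A \<Longrightarrow> e \<in> A \<Longrightarrow> Suc e \<in> A \<Longrightarrow> sum f A = f e + f (Suc e) + sum f (A - {e, Suc e})"
proof -
  assume a: "finite A" "e \<in> A" "Suc e \<in> A"
  have "sum f A = f e + sum f (A - {e})" using a by (simp add: sum.remove)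
  also have "sum f (A - {e}) = f (Suc e) + sum f (A - {e} - {Suc e})"
    using a by (intro sum.remove) auto
  finally show ?thesis by (simp add: insert_commute set_diff_eq algebra_simps)
qed

lemma sumw: "D \<ge> 1 \<Longrightarrow> real (k 1) + (\<Sum>e\<in>{1..D}. w D k e) = real (\<Sum>e\<in>{1..D}. k e)"
proof -
  assume D: "D \<ge> 1"
  have a: "(\<Sum>e\<in>{1..D}. w D k e) = (\<Sum>e\<in>{1..<D}. real (k (Suc e)))"
  proof -
    have "{1..D} = insert D {1..<D}" using D by auto
    then show ?thesis by (simp add: w_def)
  qed
  have b: "D \<ge> 1 \<Longrightarrow> real (k 1) + (\<Sum>e\<in>{1..<D}. real (k (Suc e))) = real (\<Sum>e\<in>{1..D}. k e)" for D
  proof (induction D)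
    case 0 then show ?case by simp
  next
    case (Suc D)
    show ?case
    proof (cases "D = 0")
      case True then show ?thesis by simp
    next
      case False
      then have "real (k 1) + (\<Sum>e\<in>{1..<D}. real (k (Suc e))) = real (\<Sum>e\<in>{1..D}. k e)" using Suc by simp
      then show ?thesis using False by (simp add: atLeastLessThanSuc)
    qed
  qed
  show ?thesis using a b[OF D] by simp
qed

lemma alg: "(N::real) \<noteq> 0 \<Longrightarrow> X' = X + (A - K*X + B)/N \<Longrightarrow> E = A + B - K \<Longrightarrow> X' - 1 = (1 - K/N)*(X - 1) + E/N"
  by (simp add: field_simps)

lemma Ex0: "(\<forall>i\<in>{1..D}. k i = 0) \<Longrightarrow> Ex D k n = 1"
  by (simp add: Ex_def P_def ffall_def)

lemma main_lim:
  assumes D: "D \<ge> 1"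
  shows "(\<lambda>n. Ex D k n) \<longlonglongrightarrow> 1"
proof (induction "\<Sum>i\<in>{1..D}. i * k i" arbitrary: k rule: less_induct)
  case less
  define K where "K = (\<Sum>e\<in>{1..D}. k e)"
  show ?case
  proof (cases "K = 0")
    case True
    then have "\<forall>i\<in>{1..D}. k i = 0" by (simp add: K_def)
    then have "Ex D k = (\<lambda>n. 1)" using Ex0 by blast
    then show ?thesis by simp
  next
    case False
    define a where "a n = Ex D k n - 1" for n
    define e where "e n = real (k 1) * (Ex D (k(1 := k 1 - 1)) n - 1) + (\<Sum>j\<in>{1..D}. w D k j * (Ex D (sh j k) n - 1))" for n
    have rec: "a (Suc n) = (1 - real K / real (Suc n)) * a n + e n / real (Suc n)" for n
    proof -
      have sw: "real (k 1) + (\<Sum>j\<in>{1..D}. w D k j) = real K" using sumw[OF D] by (simp add: K_def)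
      have "e n = real (k 1) * Ex D (k(1 := k 1 - 1)) n + (\<Sum>j\<in>{1..D}. w D k j * Ex D (sh j k) n)
           - (real (k 1) + (\<Sum>j\<in>{1..D}. w D k j))"
        by (simp add: e_def algebra_simps sum_subtractf)
      then have "e n = real (k 1) * Ex D (k(1 := k 1 - 1)) n + (\<Sum>j\<in>{1..D}. w D k j * Ex D (sh j k) n) - real K"
        using sw by simp
      then show ?thesis unfolding a_def
        by (intro alg[OF _ Ex_rec[OF D, of k n, unfolded K_def[symmetric]]]) simp_all
    qed
    have e0: "e \<longlonglongrightarrow> 0"
    proof -
      have t1: "(\<lambda>n. real (k 1) * (Ex D (k(1 := k 1 - 1)) n - 1)) \<longlonglongrightarrow> 0"
      proof (cases "k 1 = 0")
        case True then show ?thesis by simp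
      next
        case False
        have "(\<Sum>i\<in>{1..D}. i * (k(1 := k 1 - 1)) i) < (\<Sum>i\<in>{1..D}. i * k i)"
          by (rule sum_strict_mono_ex1) (use False D in auto)
        then have "(\<lambda>n. Ex D (k(1 := k 1 - 1)) n) \<longlonglongrightarrow> 1" by (rule less)
        then have "(\<lambda>n. Ex D (k(1 := k 1 - 1)) n - 1) \<longlonglongrightarrow> 0" by (simp add: LIM_zero_iff)
        from tendsto_mult[OF tendsto_const this] show ?thesis by simp
      qed
      have t2: "(\<lambda>n. \<Sum>j\<in>{1..D}. w D k j * (Ex D (sh j k) n - 1)) \<longlonglongrightarrow> 0"
      proof (rule tendsto_null_sum)
        fix j assume j: "j \<in> {1..D}"
        show "(\<lambda>n. w D k j * (Ex D (sh j k) n - 1)) \<longlonglongrightarrow> 0"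
        proof (cases "w D k j = 0")
          case True then show ?thesis by simp
        next
          case False
          then have jj: "Suc j \<le> D" "k (Suc j) \<ge> 1" by (auto simp: w_def split: if_splits)
          have "(\<Sum>i\<in>{1..D}. i * sh j k i) < (\<Sum>i\<in>{1..D}. i * k i)"
          proof -
            have r: "(\<Sum>i\<in>{1..D} - {j, Suc j}. i * sh j k i) = (\<Sum>i\<in>{1..D} - {j, Suc j}. i * k i)"
              by (rule sum.cong) (auto simp: sh_def)
            have "j * Suc (k j) + Suc j * (k (Suc j) - 1) < j * k j + Suc j * k (Suc j)"
              using jj(2) by (cases "k (Suc j)") auto
            then show ?thesis
              using j jj by (subst (1 2) sum_split2[of _ j]) (auto simp: r sh_def)
          qed
          then have "(\<lambda>n. Ex D (sh j k) n) \<longlonglongrightarrow> 1" by (rule less)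
          then have "(\<lambda>n. Ex D (sh j k) n - 1) \<longlonglongrightarrow> 0" by (simp add: LIM_zero_iff)
          from tendsto_mult[OF tendsto_const this] show ?thesis by simp
        qed
      qed
      show ?thesis unfolding e_def using tendsto_add[OF t1 t2] by simp
    qed
    have "a \<longlonglongrightarrow> 0"
      by (rule rec_lim[of K e a]) (use False e0 rec in auto)
    moreover have "a = (\<lambda>n. Ex D k n - 1)" by (simp add: a_def fun_eq_iff)
    ultimately have "(\<lambda>n. Ex D k n - 1) \<longlonglongrightarrow> 0" by simp
    then show ?thesis by (simp only: LIM_zero_iff)
  qed
qed


theorem mainTheorem5:
  fixes d :: nat and k :: "nat \<Rightarrow> nat"
  assumes "d \<ge> 1"
  shows "(\<lambda>n. measure_pmf.expectation (rrt n)
            (\<lambda>par. \<Prod>i\<in>{1..d}. ffall (real (Xcnt par n i)) (k i))) \<longlonglongrightarrow> 1"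
proof -
  have "(\<lambda>n. Ex d k n) \<longlonglongrightarrow> 1" by (rule main_lim[OF assms])
  then show ?thesis by (simp add: Ex_def P_def)
qed

end
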